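(* Consider the Hubbard model on a finite set $\Lambda$ of $N_s\ge2$ sites with real symmetric hopping matrix satisfying $t_{x,y}\ge0$ for all $x,y\in\Lambda$, electron number $N_e=N_s-1$, and $U=\infty$. Then among the ground states there are states with total spin $S_{\rm tot}=S_{\max}=N_e/2$ (hence a $(2S_{\max}+1)$-dimensional space of ground states with $S_{\rm tot}=S_{\max}$).
   Context: Let $\Lambda$ be a finite set of $N_s$ sites. For $x\in\Lambda$, $\sigma\in\{\uparrow,\downarrow\}$, $c_{x,\sigma}$ are fermion annihilation operators with $\{c^\dagger_{x,\sigma},c_{y,\tau}\}=\delta_{x,y}\delta_{\sigma,\tau}$, $\{c_{x,\sigma},c_{y,\tau}\}=\{c^\dagger_{x,\sigma},c^\dagger_{y,\tau}\}=0$, vacuum $\Phi_{\rm vac}$ with $c_{x,\sigma}\Phi_{\rm vac}=0$; $\mathcal H_{N_e}$ is the span of $c^\dagger_{x_1,\sigma_1}\cdots c^\dagger_{x_{N_e},\sigma_{N_e}}\Phi_{\rm vac}$. $n_{x,\sigma}=c^\dagger_{x,\sigma}c_{x,\sigma}$. For a real symmetric $T=(t_{x,y})$, $H_{\rm hop}=\sum_{x,y\in\Lambda}\sum_\sigma t_{x,y}c^\dagger_{x,\sigma}c_{y,\sigma}$. The model with $U=\infty$: let $P_0=\prod_{x\in\Lambda}(1-n_{x,\uparrow}n_{x,\downarrow})$ be the orthogonal projection onto states with no doubly occupied site; the $U=\infty$ Hubbard model is the operator $P_0H_{\rm hop}P_0$ restricted to $P_0\mathcal H_{N_e}$, and its ground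 states are its eigenvectors in $P_0\mathcal H_{N_e}$ with the lowest eigenvalue. Total spin operators $S^{(\alpha)}_{\rm tot}=\frac12\sum_x\sum_{\sigma,\tau}c^\dagger_{x,\sigma}(p^{(\alpha)})_{\sigma,\tau}c_{x,\tau}$ (Pauli matrices $p^{(\alpha)}$) commute with this operator; a state has total spin $S_{\rm tot}$ if $\sum_\alpha (S^{(\alpha)}_{\rm tot})^2$ acts on it as $S_{\rm tot}(S_{\rm tot}+1)$. $S_{\max}=N_e/2$ for $N_e\le N_s$. *)

theory Defs
  imports Complex_Main "HOL-Library.Product_Lexorder"
begin

text \<open>Fermionic Fock space over modes (x, sigma), x a site, sigma :: bool
  (True = spin up, False = spin down). Modes are ordered lexicographically.
  A state is a coefficient function on occupation sets of modes; the basis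
  vector for the set {m1 < ... < mk} is c+_{m1} ... c+_{mk} Phi_vac.\<close>

type_synonym 'a mode = "'a \<times> bool"
type_synonym 'a fstate = "'a mode set \<Rightarrow> complex"

definition fsign :: "'a::linorder mode \<Rightarrow> 'a mode set \<Rightarrow> complex" where
  "fsign m S = (-1) ^ card {m' \<in> S. m' < m}"

definition cdag :: "'a::linorder mode \<Rightarrow> 'a fstate \<Rightarrow> 'a fstate" where
  "cdag m \<psi> = (\<lambda>S. if m \<in> S then fsign m S * \<psi> (S - {m}) else 0)"

definition cop :: "'a::linorder mode \<Rightarrow> 'a fstate \<Rightarrow> 'a fstate" where
  "cop m \<psi> = (\<lambda>S. if m \<notin> S then fsign m S * \<psi> (insert m S) else 0)"

definition Hhop :: "'a::linorder set \<Rightarrow> ('a \<Rightarrow> 'a \<Rightarrow> real) \<Rightarrow> 'a fstate \<Rightarrow> 'a fstate" where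
  "Hhop \<Lambda> t \<psi> = (\<lambda>S. \<Sum>x\<in>\<Lambda>. \<Sum>y\<in>\<Lambda>. \<Sum>\<sigma>\<in>(UNIV::bool set).
      complex_of_real (t x y) * cdag (x,\<sigma>) (cop (y,\<sigma>) \<psi>) S)"

definition no_double :: "'a mode set \<Rightarrow> bool" where
  "no_double S = (\<forall>x. \<not> ((x,True) \<in> S \<and> (x,False) \<in> S))"

definition P0 :: "'a fstate \<Rightarrow> 'a fstate" where
  "P0 \<psi> = (\<lambda>S. if no_double S then \<psi> S else 0)"

definition Hinf :: "'a::linorder set \<Rightarrow> ('a \<Rightarrow> 'a \<Rightarrow> real) \<Rightarrow> 'a fstate \<Rightarrow> 'a fstate" where
  "Hinf \<Lambda> t \<psi> = P0 (Hhop \<Lambda> t (P0 \<psi>))"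

definition HNe :: "'a set \<Rightarrow> nat \<Rightarrow> 'a fstate set" where
  "HNe \<Lambda> Ne = {\<psi>. \<forall>S. \<psi> S \<noteq> 0 \<longrightarrow> S \<subseteq> \<Lambda> \<times> UNIV \<and> finite S \<and> card S = Ne}"

definition P0HNe :: "'a set \<Rightarrow> nat \<Rightarrow> 'a fstate set" where
  "P0HNe \<Lambda> Ne = P0 ` HNe \<Lambda> Ne"

definition ground_state :: "'a::linorder set \<Rightarrow> ('a \<Rightarrow> 'a \<Rightarrow> real) \<Rightarrow> nat \<Rightarrow> 'a fstate \<Rightarrow> bool" where
  "ground_state \<Lambda> t Ne \<psi> \<longleftrightarrow>
     \<psi> \<in> P0HNe \<Lambda> Ne \<and> \<psi> \<noteq> (\<lambda>_. 0) \<and>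
     (\<exists>E::real. Hinf \<Lambda> t \<psi> = (\<lambda>S. complex_of_real E * \<psi> S) \<and>
        (\<forall>\<phi> \<in> P0HNe \<Lambda> Ne. \<forall>E'::complex. \<phi> \<noteq> (\<lambda>_. 0) \<longrightarrow>
            Hinf \<Lambda> t \<phi> = (\<lambda>S. E' * \<phi> S) \<longrightarrow> E \<le> Re E'))"

text \<open>Pauli matrices p^(alpha), alpha \<in> {1,2,3}; spin index True = up = first row/column\<close>
definition pauli :: "nat \<Rightarrow> bool \<Rightarrow> bool \<Rightarrow> complex" where
  "pauli \<alpha> \<sigma> \<tau> =
     (if \<alpha> = 1 then (if \<sigma> \<noteq> \<tau> then 1 else 0)
      else if \<alpha> = 2 then (if \<sigma> = \<tau> then 0 else if \<sigma> then - \<i> else \<i>)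
      else (if \<sigma> \<noteq> \<tau> then 0 else if \<sigma> then 1 else -1))"

definition Stot :: "'a::linorder set \<Rightarrow> nat \<Rightarrow> 'a fstate \<Rightarrow> 'a fstate" where
  "Stot \<Lambda> \<alpha> \<psi> = (\<lambda>S. (1/2) * (\<Sum>x\<in>\<Lambda>. \<Sum>\<sigma>\<in>(UNIV::bool set). \<Sum>\<tau>\<in>(UNIV::bool set).
      pauli \<alpha> \<sigma> \<tau> * cdag (x,\<sigma>) (cop (x,\<tau>) \<psi>) S))"

definition Stot_sq :: "'a::linorder set \<Rightarrow> 'a fstate \<Rightarrow> 'a fstate" where
  "Stot_sq \<Lambda> \<psi> = (\<lambda>S. \<Sum>\<alpha>\<in>{1,2,3}. Stot \<Lambda> \<alpha> (Stot \<Lambda> \<alpha> \<psi>) S)"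

definition has_total_spin :: "'a::linorder set \<Rightarrow> real \<Rightarrow> 'a fstate \<Rightarrow> bool" where
  "has_total_spin \<Lambda> s \<psi> \<longleftrightarrow> Stot_sq \<Lambda> \<psi> = (\<lambda>S. complex_of_real (s * (s + 1)) * \<psi> S)"

end

theory Submission
  imports Defs
begin

lemma subseq_conv:
  fixes F :: "nat \<Rightarrow> 'a \<Rightarrow> real"
  assumes "finite I" "\<And>k x. x \<in> I \<Longrightarrow> \<bar>F k x\<bar> \<le> B"
  shows "\<exists>r g. strict_mono r \<and> (\<forall>x\<in>I. (\<lambda>k. F (r k) x) \<longlonglongrightarrow> g x)"
  using assms
proof (induction I rule: finite_induct)
  case empty
  then show ?case by (intro exI[of _ id] exI[of _ "\<lambda>_. 0"]) (auto simp: strict_mono_def)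
next
  case (insert a I)
  then obtain r g where r: "strict_mono r" and g: "\<forall>x\<in>I. (\<lambda>k. F (r k) x) \<longlonglongrightarrow> g x" by blast
  obtain s where s: "strict_mono s" and ms: "monoseq (\<lambda>k. F (r (s k)) a)"
    using seq_monosub[of "\<lambda>k. F (r k) a"] by blast
  have "Bseq (\<lambda>k. F (r (s k)) a)"
    using insert.prems by (intro BseqI'[of _ B]) auto
  then have "convergent (\<lambda>k. F (r (s k)) a)"
    using ms Bseq_monoseq_convergent by blast
  then obtain L where L: "(\<lambda>k. F (r (s k)) a) \<longlonglongrightarrow> L" by (auto simp: convergent_def)
  show ?case
  proof (intro exI[of _ "r \<circ> s"] exI[of _ "g(a := L)"] conjI ballI)
    show "strict_mono (r \<circ> s)" using r s by (simp add: strict_mono_o)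
    fix x assume x: "x \<in> insert a I"
    show "(\<lambda>k. F ((r \<circ> s) k) x) \<longlonglongrightarrow> (g(a := L)) x"
    proof (cases "x = a")
      case True then show ?thesis using L by simp
    next
      case False
      then have "x \<in> I" using x by simp
      then have "((\<lambda>k. F (r k) x) \<circ> s) \<longlonglongrightarrow> g x"
        using g s LIMSEQ_subseq_LIMSEQ by blast
      then show ?thesis using False by (simp add: o_def)
    qed
  qed
qed

lemma quad_nonneg_zero:
  fixes a c :: real
  assumes "a \<ge> 0" "\<And>s. 2 * s * a + s^2 * c \<ge> 0"
  shows "a = 0"
proof (rule ccontr)
  assume "a \<noteq> 0" then have a: "a > 0" using assms(1) by simp
  define C where "C = \<bar>c\<bar> + 1"
  have C: "C > 0" unfolding C_def by simp
  define s where "s = - a / C"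
  have sC: "s * C = - a" unfolding s_def using C by simp
  have "2 * s * a + s^2 * c \<le> 2 * s * a + s^2 * C"
    unfolding C_def by (intro add_left_mono mult_left_mono) (auto simp: power2_eq_square)
  also have "\<dots> = 2 * s * a + s * (s * C)" by (simp add: power2_eq_square)
  also have "\<dots> = s * a" using sC by simp
  also have "\<dots> < 0" unfolding s_def using a C by (simp add: divide_neg_pos mult_neg_pos)
  finally show False using assms(2)[of s] by simp
qed

lemma rayleigh:
  fixes \<Lambda> :: "'a set" and M :: "'a \<Rightarrow> 'a \<Rightarrow> real"
  assumes fin: "finite \<Lambda>" and ne: "\<Lambda> \<noteq> {}" and sym: "\<And>x y. x \<in> \<Lambda> \<Longrightarrow> y \<in> \<Lambda> \<Longrightarrow> M x y = M y x"
  shows "\<exists>\<mu> v. (\<exists>h\<in>\<Lambda>. v h \<noteq> 0) \<and> (\<forall>x\<in>\<Lambda>. (\<Sum>y\<in>\<Lambda>. M x y * v y) = \<mu> * v x) \<and>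
     (\<forall>f. \<mu> * (\<Sum>x\<in>\<Lambda>. (f x)^2) \<le> (\<Sum>x\<in>\<Lambda>. f x * (\<Sum>y\<in>\<Lambda>. M x y * f y)))"
proof -
  define Mv where "Mv u x = (\<Sum>y\<in>\<Lambda>. M x y * u y)" for u :: "'a \<Rightarrow> real" and x
  define Q where "Q u = (\<Sum>x\<in>\<Lambda>. u x * Mv u x)" for u
  define N where "N u = (\<Sum>x\<in>\<Lambda>. (u x)^2)" for u :: "'a \<Rightarrow> real"
  define K where "K = {u. N u = 1}"
  define B0 where "B0 = (\<Sum>x\<in>\<Lambda>. \<Sum>y\<in>\<Lambda>. \<bar>M x y\<bar>)"
  have coord: "\<bar>u x\<bar> \<le> 1" if "u \<in> K" "x \<in> \<Lambda>" for u x
  proof -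
    have "(u x)^2 \<le> N u" unfolding N_def
      using that(2) fin by (intro member_le_sum) auto
    then have "(u x)^2 \<le> 1" using that(1) by (simp add: K_def)
    then show ?thesis by (simp add: abs_square_le_1)
  qed
  have Qexp: "Q u = (\<Sum>x\<in>\<Lambda>. \<Sum>y\<in>\<Lambda>. u x * M x y * u y)" for u
    unfolding Q_def Mv_def by (simp add: sum_distrib_left mult.assoc)
  have Qbd: "- B0 \<le> Q u" if "u \<in> K" for u
  proof -
    have "\<bar>Q u\<bar> \<le> (\<Sum>x\<in>\<Lambda>. \<Sum>y\<in>\<Lambda>. \<bar>u x * M x y * u y\<bar>)"
      unfolding Qexp by (rule order.trans[OF sum_abs sum_mono]) (rule sum_abs)
    also have "\<dots> \<le> B0" unfolding B0_def
    proof (intro sum_mono)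
      fix x y assume "x \<in> \<Lambda>" "y \<in> \<Lambda>"
      then have "\<bar>u x\<bar> \<le> 1" "\<bar>u y\<bar> \<le> 1" using coord that by auto
      then have "\<bar>u x\<bar> * \<bar>u y\<bar> \<le> 1" by (simp add: mult_le_one)
      then have "\<bar>u x\<bar> * \<bar>u y\<bar> * \<bar>M x y\<bar> \<le> \<bar>M x y\<bar>"
        by (simp add: mult_left_le_one_le mult_le_cancel_right1)
      then show "\<bar>u x * M x y * u y\<bar> \<le> \<bar>M x y\<bar>" by (simp add: abs_mult algebra_simps)
    qed
    finally show ?thesis by simp
  qed
  obtain h0 where h0: "h0 \<in> \<Lambda>" using ne by blast
  have "(\<lambda>x. if x = h0 then 1 else 0) \<in> K"
    unfolding K_def N_def using fin h0 by (simp add: if_distrib[of "\<lambda>z. z^2"] sum.delta cong: if_cong)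
  then have Kne: "K \<noteq> {}" by blast
  have bdd: "bdd_below (Q ` K)" by (rule bdd_belowI[where m="-B0"]) (auto intro: Qbd)
  define m where "m = Inf (Q ` K)"
  have mle: "m \<le> Q u" if "u \<in> K" for u unfolding m_def using bdd that by (simp add: cInf_lower)
  have "\<exists>u\<in>K. Q u < m + 1 / real (Suc k)" for k
  proof -
    have "Inf (Q ` K) < m + 1 / real (Suc k)" unfolding m_def by simp
    then show ?thesis using cInf_lessD[of "Q ` K"] Kne by blast
  qed
  then obtain F where F: "\<And>k. F k \<in> K" "\<And>k. Q (F k) < m + 1 / real (Suc k)" by metis
  obtain r g where r: "strict_mono r" and g: "\<forall>x\<in>\<Lambda>. (\<lambda>k. F (r k) x) \<longlonglongrightarrow> g x"
    using subseq_conv[OF fin, of F 1] coord F(1) by blast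
  have Nlim: "(\<lambda>k. N (F (r k))) \<longlonglongrightarrow> N g"
    unfolding N_def by (intro tendsto_sum tendsto_power) (use g in auto)
  have "(\<lambda>k. N (F (r k))) \<longlonglongrightarrow> 1" using F(1) by (simp add: K_def)
  then have Ng: "N g = 1" using Nlim LIMSEQ_unique by blast
  have Qlim: "(\<lambda>k. Q (F (r k))) \<longlonglongrightarrow> Q g"
    unfolding Q_def Mv_def by (intro tendsto_sum tendsto_mult tendsto_const) (use g in auto)
  have "(\<lambda>k. Q (F (r k))) \<longlonglongrightarrow> m"
  proof (rule tendsto_sandwich[of "\<lambda>_. m" _ _ "\<lambda>k. m + 1 / real (Suc k)"])
    show "\<forall>\<^sub>F k in sequentially. m \<le> Q (F (r k))" using mle F(1) by simp
    show "\<forall>\<^sub>F k in sequentially. Q (F (r k)) \<le> m + 1 / real (Suc k)"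
    proof (intro always_eventually allI)
      fix k
      have "k \<le> r k" using r by (simp add: seq_suble)
      then have "1 / real (Suc (r k)) \<le> 1 / real (Suc k)" by (simp add: frac_le)
      then show "Q (F (r k)) \<le> m + 1 / real (Suc k)" using F(2)[of "r k"] by simp
    qed
    have "(\<lambda>k. m + 1 / real (Suc k)) \<longlonglongrightarrow> m + 0"
      by (intro tendsto_add tendsto_const) (use LIMSEQ_inverse_real_of_nat in \<open>simp add: divide_inverse\<close>)
    then show "(\<lambda>k. m + 1 / real (Suc k)) \<longlonglongrightarrow> m" by simp
  qed simp
  then have Qg: "Q g = m" using Qlim LIMSEQ_unique by blast
  have lower: "m * N f \<le> Q f" for f
  proof (cases "N f = 0")
    case True
    then have "\<forall>x\<in>\<Lambda>. (f x)^2 = 0" unfolding N_def using fin by (subst (asm) sum_nonneg_eq_0_iff) auto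
    then have "Q f = 0" unfolding Q_def by simp
    then show ?thesis using True by simp
  next
    case False
    have Nnn: "N f \<ge> 0" unfolding N_def by (simp add: sum_nonneg)
    then have Np: "N f > 0" using False by simp
    define c where "c = sqrt (N f)"
    have c: "c > 0" "c^2 = N f" unfolding c_def using Np by auto
    define u where "u x = f x / c" for x
    have "N u = N f / c^2" unfolding N_def u_def by (simp add: power_divide sum_divide_distrib)
    then have "u \<in> K" using c Np by (simp add: K_def)
    moreover have "Q u = Q f / c^2" unfolding Qexp u_def
      by (simp add: sum_divide_distrib power2_eq_square)
    ultimately have "m \<le> Q f / c^2" using mle by metis
    then show ?thesis using c Np by (simp add: pos_le_divide_eq)
  qed
  define h where "h x = Mv g x - m * g x" for x
  define k where "k x = Mv h x - m * h x" for x
  have Mvlin: "Mv (\<lambda>x. g x + s * h x) x = Mv g x + s * Mv h x" for s x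
    unfolding Mv_def by (simp add: algebra_simps sum.distrib sum_distrib_left)
  have symsum: "(\<Sum>x\<in>\<Lambda>. g x * Mv h x) = (\<Sum>x\<in>\<Lambda>. h x * Mv g x)"
  proof -
    have "(\<Sum>x\<in>\<Lambda>. g x * Mv h x) = (\<Sum>x\<in>\<Lambda>. \<Sum>y\<in>\<Lambda>. g x * M x y * h y)"
      unfolding Mv_def by (simp add: sum_distrib_left mult.assoc)
    also have "\<dots> = (\<Sum>y\<in>\<Lambda>. \<Sum>x\<in>\<Lambda>. g x * M x y * h y)" by (rule sum.swap)
    also have "\<dots> = (\<Sum>y\<in>\<Lambda>. \<Sum>x\<in>\<Lambda>. h y * M y x * g x)"
      by (intro sum.cong refl) (simp add: sym)
    also have "\<dots> = (\<Sum>x\<in>\<Lambda>. h x * Mv g x)"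
      unfolding Mv_def by (simp add: sum_distrib_left mult.assoc)
    finally show ?thesis .
  qed
  define a where "a = (\<Sum>x\<in>\<Lambda>. (h x)^2)"
  define cc where "cc = (\<Sum>x\<in>\<Lambda>. h x * k x)"
  have gh0: "(\<Sum>x\<in>\<Lambda>. g x * h x) = 0"
  proof -
    have "(\<Sum>x\<in>\<Lambda>. g x * h x) = Q g - m * N g"
      unfolding h_def Q_def N_def by (simp add: algebra_simps sum_subtractf sum_distrib_left power2_eq_square)
    then show ?thesis using Qg Ng by simp
  qed
  have gk: "(\<Sum>x\<in>\<Lambda>. g x * k x) = a"
  proof -
    have "(\<Sum>x\<in>\<Lambda>. g x * k x) = (\<Sum>x\<in>\<Lambda>. g x * Mv h x) - m * (\<Sum>x\<in>\<Lambda>. g x * h x)"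
      unfolding k_def by (simp add: algebra_simps sum_subtractf sum_distrib_left)
    also have "\<dots> = (\<Sum>x\<in>\<Lambda>. h x * Mv g x) - m * (\<Sum>x\<in>\<Lambda>. h x * g x)"
      using symsum by (simp add: mult.commute)
    also have "\<dots> = a" unfolding a_def h_def
      by (simp add: algebra_simps sum_subtractf sum_distrib_left power2_eq_square sum.distrib)
    finally show ?thesis .
  qed
  have quad: "2 * s * a + s^2 * cc \<ge> 0" for s
  proof -
    define f where "f = (\<lambda>x. g x + s * h x)"
    have e1: "Mv g x = h x + m * g x" and e2: "Mv h x = k x + m * h x" for x
      unfolding h_def k_def by simp_all
    have "Q f - m * N f = (\<Sum>x\<in>\<Lambda>. f x * Mv f x - m * (f x)^2)"
      unfolding Q_def N_def by (simp add: sum_subtractf sum_distrib_left)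
    also have "\<dots> = (\<Sum>x\<in>\<Lambda>. (g x + s * h x) * (h x + s * k x))"
      by (intro sum.cong refl) (simp add: f_def Mvlin e1 e2 algebra_simps power2_eq_square)
    also have "\<dots> = (\<Sum>x\<in>\<Lambda>. g x * h x) + s * (\<Sum>x\<in>\<Lambda>. g x * k x) + s * a + s^2 * cc"
      unfolding a_def cc_def
      by (simp add: sum.distrib sum_distrib_left power2_eq_square algebra_simps)
    also have "\<dots> = 2 * s * a + s^2 * cc" using gh0 gk by simp
    finally show ?thesis using lower[of f] by simp
  qed
  have "a = 0" using quad_nonneg_zero[of a cc] quad unfolding a_def by (simp add: sum_nonneg)
  then have "\<forall>x\<in>\<Lambda>. (h x)^2 = 0" unfolding a_def using fin by (subst (asm) sum_nonneg_eq_0_iff) auto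
  then have eig: "\<forall>x\<in>\<Lambda>. Mv g x = m * g x" unfolding h_def by simp
  have "\<exists>x\<in>\<Lambda>. g x \<noteq> 0"
  proof (rule ccontr)
    assume "\<not> ?thesis" then have "N g = 0" unfolding N_def by simp
    then show False using Ng by simp
  qed
  then show ?thesis using eig lower unfolding Mv_def Q_def N_def by blast
qed

definition cf :: "'a set \<Rightarrow> 'a \<Rightarrow> 'a set \<Rightarrow> 'a mode set" where
  "cf \<Lambda> h D = (\<lambda>y. (y, y \<notin> D)) ` (\<Lambda> - {h})"

definition sw :: "'a \<Rightarrow> 'a \<Rightarrow> 'a set \<Rightarrow> 'a set" where
  "sw x h D = (if x \<in> D then insert h (D - {x}) else D)"

lemma fsign_cases: "fsign m S = 1 \<or> fsign m S = -1"
  unfolding fsign_def by (metis neg_one_even_power neg_one_odd_power)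

lemma fsign_sq: "fsign m S * fsign m S = 1"
  using fsign_cases[of m S] by auto

lemma fsign_norm: "norm (fsign m S) = 1"
  using fsign_cases[of m S] by auto

lemma fsign_remove: "fsign m (S - {m}) = fsign m S"
proof -
  have "{m' \<in> S - {m}. m' < m} = {m' \<in> S. m' < m}" by auto
  then show ?thesis unfolding fsign_def by simp
qed

lemma fsign_insert: "fsign m (insert m S) = fsign m S"
proof -
  have "{m' \<in> insert m S. m' < m} = {m' \<in> S. m' < m}" by auto
  then show ?thesis unfolding fsign_def by simp
qed

lemma cdag_cop: "cdag m (cop m' \<phi>) S =
  (if m \<in> S \<and> m' \<notin> S - {m} then fsign m S * fsign m' (S - {m}) * \<phi> (insert m' (S - {m})) else 0)"
  unfolding cdag_def cop_def by auto

lemma cdag_cop_same: "cdag m (cop m \<phi>) S = (if m \<in> S then \<phi> S else 0)"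
  unfolding cdag_cop by (auto simp: fsign_remove fsign_sq insert_absorb)

lemma mem_cf: "(z, \<sigma>) \<in> cf \<Lambda> h D \<longleftrightarrow> z \<in> \<Lambda> \<and> z \<noteq> h \<and> \<sigma> = (z \<notin> D)"
  unfolding cf_def by auto

lemma cf_no_double: "no_double (cf \<Lambda> h D)"
  unfolding no_double_def by (auto simp: mem_cf)

lemma P0_cf: "P0 \<phi> (cf \<Lambda> h D) = \<phi> (cf \<Lambda> h D)"
  by (simp add: P0_def cf_no_double)

lemma move_cf:
  assumes "x \<in> \<Lambda>" "x \<noteq> h" "h \<in> \<Lambda>" "D \<subseteq> \<Lambda> - {h}"
  shows "insert (h, x \<notin> D) (cf \<Lambda> h D - {(x, x \<notin> D)}) = cf \<Lambda> x (sw x h D)"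
  using assms unfolding sw_def by (auto simp: mem_cf)

definition sg :: "'a::linorder set \<Rightarrow> 'a \<Rightarrow> 'a \<Rightarrow> 'a set \<Rightarrow> complex" where
  "sg \<Lambda> x h D = fsign (x, x \<notin> D) (cf \<Lambda> h D) * fsign (h, x \<notin> D) (cf \<Lambda> h D - {(x, x \<notin> D)})"

lemma sg_norm: "norm (sg \<Lambda> x h D) = 1"
  unfolding sg_def by (simp add: norm_mult fsign_norm)

lemma term_cf:
  fixes \<phi> :: "'a::linorder fstate"
  assumes "x \<in> \<Lambda>" "y \<in> \<Lambda>" "h \<in> \<Lambda>" "D \<subseteq> \<Lambda> - {h}"
  shows "cdag (x,\<sigma>) (cop (y,\<sigma>) (P0 \<phi>)) (cf \<Lambda> h D) =
    (if \<sigma> = (x \<notin> D) then (if x \<noteq> h \<and> y = x then \<phi> (cf \<Lambda> h D) else 0)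
       + (if x \<noteq> h \<and> y = h then sg \<Lambda> x h D * \<phi> (cf \<Lambda> x (sw x h D)) else 0) else 0)"
proof (cases "(x,\<sigma>) \<in> cf \<Lambda> h D")
  case False
  then show ?thesis using assms by (auto simp: cdag_cop mem_cf)
next
  case True
  then have xh: "x \<noteq> h" and sx: "\<sigma> = (x \<notin> D)" by (auto simp: mem_cf)
  show ?thesis
  proof (cases "y = x")
    case True
    then show ?thesis using xh sx \<open>(x,\<sigma>) \<in> cf \<Lambda> h D\<close>
      by (simp add: cdag_cop_same P0_cf)
  next
    case yx: False
    show ?thesis
    proof (cases "y = h")
      case True
      have "(h, \<sigma>) \<notin> cf \<Lambda> h D - {(x, \<sigma>)}" by (simp add: mem_cf)
      then show ?thesis using True xh sx \<open>(x,\<sigma>) \<in> cf \<Lambda> h D\<close> move_cf[OF assms(1) xh assms(3,4)]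
        by (simp add: cdag_cop P0_cf sg_def)
    next
      case yh: False
      show ?thesis
      proof (cases "\<sigma> = (y \<notin> D)")
        case True
        then have "(y, \<sigma>) \<in> cf \<Lambda> h D - {(x, \<sigma>)}" using assms yx yh by (auto simp: mem_cf)
        then show ?thesis using yx yh by (simp add: cdag_cop)
      next
        case False
        have "\<not> no_double (insert (y, \<sigma>) (cf \<Lambda> h D - {(x, \<sigma>)}))"
          unfolding no_double_def using False assms yx yh
          by (cases \<sigma>) (auto simp: mem_cf)
        then have z: "P0 \<phi> (insert (y, \<sigma>) (cf \<Lambda> h D - {(x, \<sigma>)})) = 0" by (simp add: P0_def)
        have "cdag (x,\<sigma>) (cop (y,\<sigma>) (P0 \<phi>)) (cf \<Lambda> h D) = 0" unfolding cdag_cop z by simp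
        then show ?thesis using yx yh by simp
      qed
    qed
  qed
qed

lemma sum_bool: "(\<Sum>\<sigma>\<in>(UNIV::bool set). f \<sigma>) = f True + f False"
  by (simp add: UNIV_bool add.commute)

lemma Hinf_cf:
  fixes \<phi> :: "'a::linorder fstate"
  assumes fin: "finite \<Lambda>" and h: "h \<in> \<Lambda>" and D: "D \<subseteq> \<Lambda> - {h}"
  shows "Hinf \<Lambda> t \<phi> (cf \<Lambda> h D) = (\<Sum>x\<in>\<Lambda>-{h}. complex_of_real (t x x)) * \<phi> (cf \<Lambda> h D)
     + (\<Sum>x\<in>\<Lambda>-{h}. complex_of_real (t x h) * sg \<Lambda> x h D * \<phi> (cf \<Lambda> x (sw x h D)))"
proof -
  define S where "S = cf \<Lambda> h D"
  have inner: "(\<Sum>y\<in>\<Lambda>. \<Sum>\<sigma>\<in>(UNIV::bool set). complex_of_real (t x y) * cdag (x,\<sigma>) (cop (y,\<sigma>) (P0 \<phi>)) S)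
     = (if x \<noteq> h then complex_of_real (t x x) * \<phi> S + complex_of_real (t x h) * sg \<Lambda> x h D * \<phi> (cf \<Lambda> x (sw x h D)) else 0)"
    if x: "x \<in> \<Lambda>" for x
  proof -
    have "(\<Sum>y\<in>\<Lambda>. \<Sum>\<sigma>\<in>(UNIV::bool set). complex_of_real (t x y) * cdag (x,\<sigma>) (cop (y,\<sigma>) (P0 \<phi>)) S)
      = (\<Sum>y\<in>\<Lambda>. (if y = x then (if x \<noteq> h then complex_of_real (t x x) * \<phi> S else 0) else 0)
          + (if y = h then (if x \<noteq> h then complex_of_real (t x h) * (sg \<Lambda> x h D * \<phi> (cf \<Lambda> x (sw x h D))) else 0) else 0))"
      unfolding S_def
      by (intro sum.cong refl) (auto simp: sum_bool term_cf x h D)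
    also have "\<dots> = (if x \<noteq> h then complex_of_real (t x x) * \<phi> S + complex_of_real (t x h) * sg \<Lambda> x h D * \<phi> (cf \<Lambda> x (sw x h D)) else 0)"
      using fin x h by (simp add: sum.distrib sum.delta' mult.assoc)
    finally show ?thesis .
  qed
  have "Hinf \<Lambda> t \<phi> S = Hhop \<Lambda> t (P0 \<phi>) S" unfolding S_def by (simp add: Hinf_def P0_def cf_no_double)
  also have "\<dots> = (\<Sum>x\<in>\<Lambda>. if x \<noteq> h then complex_of_real (t x x) * \<phi> S + complex_of_real (t x h) * sg \<Lambda> x h D * \<phi> (cf \<Lambda> x (sw x h D)) else 0)"
    unfolding Hhop_def by (intro sum.cong refl inner)
  also have "\<dots> = (\<Sum>x\<in>\<Lambda>-{h}. complex_of_real (t x x) * \<phi> S + complex_of_real (t x h) * sg \<Lambda> x h D * \<phi> (cf \<Lambda> x (sw x h D)))"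
    using fin by (simp add: sum.inter_filter[symmetric] set_diff_eq)
  also have "\<dots> = (\<Sum>x\<in>\<Lambda>-{h}. complex_of_real (t x x)) * \<phi> S
     + (\<Sum>x\<in>\<Lambda>-{h}. complex_of_real (t x h) * sg \<Lambda> x h D * \<phi> (cf \<Lambda> x (sw x h D)))"
    by (simp add: sum.distrib sum_distrib_right)
  finally show ?thesis unfolding S_def .
qed

lemma support_cf:
  assumes fin: "finite \<Lambda>" and c1: "card \<Lambda> \<ge> 1" and P: "\<phi> \<in> P0HNe \<Lambda> (card \<Lambda> - 1)" and nz: "\<phi> S \<noteq> 0"
  shows "\<exists>h\<in>\<Lambda>. \<exists>D. D \<subseteq> \<Lambda> - {h} \<and> S = cf \<Lambda> h D"
proof -
  obtain \<psi> where \<psi>: "\<psi> \<in> HNe \<Lambda> (card \<Lambda> - 1)" "\<phi> = P0 \<psi>" using P unfolding P0HNe_def by blast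
  have nd: "no_double S" and ps: "\<psi> S \<noteq> 0" using nz \<psi>(2) by (auto simp: P0_def split: if_splits)
  have sub: "S \<subseteq> \<Lambda> \<times> UNIV" and finS: "finite S" and cardS: "card S = card \<Lambda> - 1"
    using \<psi>(1) ps unfolding HNe_def by auto
  have uniq: "b = c" if "(a,b) \<in> S" "(a,c) \<in> S" for a b c
    using nd that unfolding no_double_def by (cases b; cases c) auto
  have inj: "inj_on fst S"
  proof (rule inj_onI)
    fix p q assume "p \<in> S" "q \<in> S" "fst p = fst q"
    then show "p = q" using uniq[of "fst p" "snd p" "snd q"] by (cases p; cases q) auto
  qed
  have fS: "fst ` S \<subseteq> \<Lambda>" using sub by auto
  have "card (fst ` S) = card \<Lambda> - 1" using inj cardS by (simp add: card_image)
  then have "card (\<Lambda> - fst ` S) = 1"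
    using fS fin card_Diff_subset[of "fst ` S" \<Lambda>] finite_subset[OF fS fin] c1 by simp
  then obtain h where hh: "\<Lambda> - fst ` S = {h}" by (rule card_1_singletonE)
  then have hL: "h \<in> \<Lambda>" and hS: "h \<notin> fst ` S" by auto
  define D where "D = {y. (y, False) \<in> S}"
  have Dsub: "D \<subseteq> \<Lambda> - {h}" unfolding D_def using fS hS by force
  have "S = cf \<Lambda> h D"
  proof (intro set_eqI iffI)
    fix p assume p: "p \<in> S"
    obtain z \<sigma> where pz: "p = (z, \<sigma>)" by (cases p)
    have "z \<in> \<Lambda>" "z \<noteq> h" using p pz fS hS by force+
    moreover have "\<sigma> = (z \<notin> D)" using p pz uniq unfolding D_def by (cases \<sigma>) auto
    ultimately show "p \<in> cf \<Lambda> h D" using pz by (simp add: mem_cf)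
  next
    fix p assume p: "p \<in> cf \<Lambda> h D"
    obtain z \<sigma> where pz: "p = (z, \<sigma>)" by (cases p)
    then have z: "z \<in> \<Lambda>" "z \<noteq> h" "\<sigma> = (z \<notin> D)" using p by (auto simp: mem_cf)
    then have "z \<in> fst ` S" using hh by blast
    then obtain b where b: "(z, b) \<in> S" by force
    have "b = (z \<notin> D)" using b uniq unfolding D_def by (cases b) auto
    then show "p \<in> S" using b z pz by simp
  qed
  then show ?thesis using hL Dsub by blast
qed

lemma sw_bij:
  assumes "x \<in> \<Lambda>" "h \<in> \<Lambda>" "x \<noteq> h"
  shows "bij_betw (sw x h) (Pow (\<Lambda> - {h})) (Pow (\<Lambda> - {x}))"
proof (rule bij_betw_byWitness[where f' = "sw h x"])
  show "\<forall>D\<in>Pow (\<Lambda> - {h}). sw h x (sw x h D) = D" using assms unfolding sw_def by auto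
  show "\<forall>D\<in>Pow (\<Lambda> - {x}). sw x h (sw h x D) = D" using assms unfolding sw_def by auto
  show "sw x h ` Pow (\<Lambda> - {h}) \<subseteq> Pow (\<Lambda> - {x})" using assms unfolding sw_def by auto
  show "sw h x ` Pow (\<Lambda> - {x}) \<subseteq> Pow (\<Lambda> - {h})" using assms unfolding sw_def by auto
qed

lemma lower_bound:
  fixes \<Lambda> :: "'a::linorder set" and t :: "'a \<Rightarrow> 'a \<Rightarrow> real"
  assumes fin: "finite \<Lambda>" and c1: "card \<Lambda> \<ge> 1"
    and tnn: "\<forall>x\<in>\<Lambda>. \<forall>y\<in>\<Lambda>. t x y \<ge> 0"
    and P: "\<phi> \<in> P0HNe \<Lambda> (card \<Lambda> - 1)" and nz: "\<phi> \<noteq> (\<lambda>_. 0)"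
    and eig: "Hinf \<Lambda> t \<phi> = (\<lambda>S. E' * \<phi> S)"
    and ray: "\<forall>f. \<mu> * (\<Sum>x\<in>\<Lambda>. (f x)^2) \<le> (\<Sum>x\<in>\<Lambda>. f x * (\<Sum>y\<in>\<Lambda>. M x y * f y))"
    and Mdef: "M = (\<lambda>x y. if x = y then (\<Sum>z\<in>\<Lambda>-{x}. t z z) else - t y x)"
  shows "\<mu> \<le> Re E'"
proof -
  define dr where "dr h = (\<Sum>z\<in>\<Lambda>-{h}. t z z)" for h
  define f where "f h = (\<Sum>D\<in>Pow (\<Lambda>-{h}). cmod (\<phi> (cf \<Lambda> h D)))" for h
  have fnn: "f h \<ge> 0" for h unfolding f_def by (simp add: sum_nonneg)
  have B2: "dr h * cmod (\<phi> (cf \<Lambda> h D)) - (\<Sum>x\<in>\<Lambda>-{h}. t x h * cmod (\<phi> (cf \<Lambda> x (sw x h D))))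
      \<le> Re E' * cmod (\<phi> (cf \<Lambda> h D))" if h: "h \<in> \<Lambda>" and D: "D \<subseteq> \<Lambda> - {h}" for h D
  proof -
    define a where "a = \<phi> (cf \<Lambda> h D)"
    define R where "R = (\<Sum>x\<in>\<Lambda>-{h}. complex_of_real (t x h) * sg \<Lambda> x h D * \<phi> (cf \<Lambda> x (sw x h D)))"
    have H: "Hinf \<Lambda> t \<phi> (cf \<Lambda> h D) = E' * a" using eig unfolding a_def by simp
    have "E' * a = complex_of_real (dr h) * a + R"
      using Hinf_cf[OF fin h D, of t \<phi>] unfolding H a_def R_def dr_def of_real_sum .
    then have eq: "(E' - complex_of_real (dr h)) * a = R" by (simp add: algebra_simps)
    have "cmod R \<le> (\<Sum>x\<in>\<Lambda>-{h}. cmod (complex_of_real (t x h) * sg \<Lambda> x h D * \<phi> (cf \<Lambda> x (sw x h D))))"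
      unfolding R_def by (rule norm_sum)
    also have "\<dots> = (\<Sum>x\<in>\<Lambda>-{h}. t x h * cmod (\<phi> (cf \<Lambda> x (sw x h D))))"
      using tnn h by (intro sum.cong refl) (simp add: norm_mult sg_norm)
    finally have Rle: "cmod R \<le> (\<Sum>x\<in>\<Lambda>-{h}. t x h * cmod (\<phi> (cf \<Lambda> x (sw x h D))))" .
    have "cmod R = cmod (E' - complex_of_real (dr h)) * cmod a" using eq by (metis norm_mult)
    moreover have "- cmod (E' - complex_of_real (dr h)) \<le> Re E' - dr h"
      using abs_Re_le_cmod[of "E' - complex_of_real (dr h)"] by simp
    ultimately have "- cmod R \<le> (Re E' - dr h) * cmod a"
      using mult_right_mono[of "- cmod (E' - complex_of_real (dr h))" "Re E' - dr h" "cmod a"] by simp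
    then show ?thesis using Rle unfolding a_def by (simp add: algebra_simps)
  qed
  have B3: "dr h * f h - (\<Sum>x\<in>\<Lambda>-{h}. t x h * f x) \<le> Re E' * f h" if h: "h \<in> \<Lambda>" for h
  proof -
    have re: "(\<Sum>D\<in>Pow (\<Lambda>-{h}). cmod (\<phi> (cf \<Lambda> x (sw x h D)))) = f x" if x: "x \<in> \<Lambda>-{h}" for x
      unfolding f_def using sum.reindex_bij_betw[OF sw_bij[of x \<Lambda> h], of "\<lambda>D. cmod (\<phi> (cf \<Lambda> x D))"] x h by simp
    have "(\<Sum>D\<in>Pow (\<Lambda>-{h}). dr h * cmod (\<phi> (cf \<Lambda> h D)) - (\<Sum>x\<in>\<Lambda>-{h}. t x h * cmod (\<phi> (cf \<Lambda> x (sw x h D)))))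
        \<le> (\<Sum>D\<in>Pow (\<Lambda>-{h}). Re E' * cmod (\<phi> (cf \<Lambda> h D)))"
      using B2 h by (intro sum_mono) auto
    moreover have "(\<Sum>D\<in>Pow (\<Lambda>-{h}). dr h * cmod (\<phi> (cf \<Lambda> h D)) - (\<Sum>x\<in>\<Lambda>-{h}. t x h * cmod (\<phi> (cf \<Lambda> x (sw x h D)))))
        = dr h * f h - (\<Sum>x\<in>\<Lambda>-{h}. t x h * (\<Sum>D\<in>Pow (\<Lambda>-{h}). cmod (\<phi> (cf \<Lambda> x (sw x h D)))))"
    proof -
      have "(\<Sum>D\<in>Pow (\<Lambda>-{h}). \<Sum>x\<in>\<Lambda>-{h}. t x h * cmod (\<phi> (cf \<Lambda> x (sw x h D))))
          = (\<Sum>x\<in>\<Lambda>-{h}. \<Sum>D\<in>Pow (\<Lambda>-{h}). t x h * cmod (\<phi> (cf \<Lambda> x (sw x h D))))"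
        by (rule sum.swap)
      then show ?thesis unfolding f_def sum_subtractf by (simp add: sum_distrib_left)
    qed
    moreover have "(\<Sum>x\<in>\<Lambda>-{h}. t x h * (\<Sum>D\<in>Pow (\<Lambda>-{h}). cmod (\<phi> (cf \<Lambda> x (sw x h D))))) = (\<Sum>x\<in>\<Lambda>-{h}. t x h * f x)"
      by (intro sum.cong refl) (simp add: re)
    moreover have "(\<Sum>D\<in>Pow (\<Lambda>-{h}). Re E' * cmod (\<phi> (cf \<Lambda> h D))) = Re E' * f h"
      unfolding f_def by (simp add: sum_distrib_left)
    ultimately show ?thesis by simp
  qed
  have B4: "(\<Sum>y\<in>\<Lambda>. M h y * f y) = dr h * f h - (\<Sum>y\<in>\<Lambda>-{h}. t y h * f y)" if h: "h \<in> \<Lambda>" for h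
  proof -
    have "(\<Sum>y\<in>\<Lambda>. M h y * f y) = M h h * f h + (\<Sum>y\<in>\<Lambda>-{h}. M h y * f y)"
      using fin h by (simp add: sum.remove)
    also have "(\<Sum>y\<in>\<Lambda>-{h}. M h y * f y) = - (\<Sum>y\<in>\<Lambda>-{h}. t y h * f y)"
      unfolding Mdef sum_negf[symmetric] by (intro sum.cong refl) auto
    finally show ?thesis unfolding Mdef dr_def by simp
  qed
  have B5: "(\<Sum>h\<in>\<Lambda>. f h * (\<Sum>y\<in>\<Lambda>. M h y * f y)) \<le> Re E' * (\<Sum>h\<in>\<Lambda>. (f h)^2)"
  proof -
    have "(\<Sum>h\<in>\<Lambda>. f h * (\<Sum>y\<in>\<Lambda>. M h y * f y)) \<le> (\<Sum>h\<in>\<Lambda>. f h * (Re E' * f h))"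
      using B3 B4 fnn by (intro sum_mono mult_left_mono) auto
    then show ?thesis by (simp add: sum_distrib_left power2_eq_square algebra_simps)
  qed
  obtain S0 where S0: "\<phi> S0 \<noteq> 0" using nz by auto
  obtain h0 D0 where h0: "h0 \<in> \<Lambda>" "D0 \<subseteq> \<Lambda> - {h0}" "S0 = cf \<Lambda> h0 D0"
    using support_cf[OF fin c1 P S0] by blast
  have "cmod (\<phi> S0) \<le> f h0" unfolding f_def h0(3)
    using fin h0(2) by (intro member_le_sum) auto
  then have "f h0 > 0" using S0 by (meson norm_le_zero_iff not_le order.trans)
  then have "(f h0)^2 > 0" by simp
  moreover have "(f h0)^2 \<le> (\<Sum>h\<in>\<Lambda>. (f h)^2)" using fin h0(1) by (intro member_le_sum) auto
  ultimately have Npos: "(\<Sum>h\<in>\<Lambda>. (f h)^2) > 0" by linarith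
  have "\<mu> * (\<Sum>h\<in>\<Lambda>. (f h)^2) \<le> Re E' * (\<Sum>h\<in>\<Lambda>. (f h)^2)" using ray[rule_format, of f] B5 by linarith
  then show ?thesis using Npos by simp
qed

definition sgnc :: "'a::linorder set \<Rightarrow> 'a \<Rightarrow> real" where
  "sgnc \<Lambda> h = (-1) ^ card {y \<in> \<Lambda>. y < h}"

lemma sgnc_sq: "sgnc \<Lambda> h * sgnc \<Lambda> h = 1"
  unfolding sgnc_def by (simp flip: power_add) 

lemma card_up_less:
  assumes "finite \<Lambda>" and that: "A = (\<lambda>y. (y, True)) ` (\<Lambda> - H)"
  shows "card {m' \<in> A. m' < (x, True)} = card {y \<in> \<Lambda> - H. y < x}"
proof -
  have "{m' \<in> A. m' < (x, True)} = (\<lambda>y. (y, True)) ` {y \<in> \<Lambda> - H. y < x}"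
    using that by auto
  moreover have "inj_on (\<lambda>y::'a. (y, True)) {y \<in> \<Lambda> - H. y < x}" by (auto simp: inj_on_def)
  ultimately show ?thesis by (simp add: card_image)
qed

lemma sg_empty:
  fixes \<Lambda> :: "'a::linorder set"
  assumes fin: "finite \<Lambda>" and x: "x \<in> \<Lambda>" and h: "h \<in> \<Lambda>" and xh: "x \<noteq> h"
  shows "sg \<Lambda> x h {} = - complex_of_real (sgnc \<Lambda> h * sgnc \<Lambda> x)"
proof -
  have cfe: "cf \<Lambda> h {} = (\<lambda>y. (y, True)) ` (\<Lambda> - {h})" unfolding cf_def by simp
  have cfe2: "cf \<Lambda> h {} - {(x, True)} = (\<lambda>y. (y, True)) ` (\<Lambda> - {h, x})" unfolding cf_def by auto
  have e1: "card {m' \<in> cf \<Lambda> h {}. m' < (x, True)} = card {y \<in> \<Lambda> - {h}. y < x}"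
    using card_up_less[OF fin cfe] .
  have e2: "card {m' \<in> cf \<Lambda> h {} - {(x, True)}. m' < (h, True)} = card {y \<in> \<Lambda> - {h, x}. y < h}"
    using card_up_less[OF fin cfe2] .
  have sgv: "sg \<Lambda> x h {} = (-1) ^ card {y \<in> \<Lambda> - {h}. y < x} * (-1) ^ card {y \<in> \<Lambda> - {h, x}. y < h}"
    unfolding sg_def fsign_def using e1 e2 by simp
  define a where "a = card {y \<in> \<Lambda>. y < x}"
  define b where "b = card {y \<in> \<Lambda>. y < h}"
  have fa: "finite {y \<in> \<Lambda>. y < x}" "finite {y \<in> \<Lambda>. y < h}" using fin by auto
  show ?thesis
  proof (cases "h < x")
    case True
    have s1: "{y \<in> \<Lambda> - {h}. y < x} = {y \<in> \<Lambda>. y < x} - {h}" by auto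
    have s2: "{y \<in> \<Lambda> - {h, x}. y < h} = {y \<in> \<Lambda>. y < h}" using True by auto
    have hin: "h \<in> {y \<in> \<Lambda>. y < x}" using True h by simp
    have "a = Suc (card {y \<in> \<Lambda> - {h}. y < x})"
      unfolding a_def s1 using card_Suc_Diff1[OF fa(1) hin] by simp
    then show ?thesis unfolding sgv sgnc_def s2 a_def[symmetric] b_def[symmetric]
      by simp
  next
    case False
    then have True': "x < h" using xh by auto
    have s1: "{y \<in> \<Lambda> - {h}. y < x} = {y \<in> \<Lambda>. y < x}" using True' by auto
    have s2: "{y \<in> \<Lambda> - {h, x}. y < h} = {y \<in> \<Lambda>. y < h} - {x}" by auto
    have xin: "x \<in> {y \<in> \<Lambda>. y < h}" using True' x by simp
    have "b = Suc (card {y \<in> \<Lambda> - {h, x}. y < h})"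
      unfolding b_def s2 using card_Suc_Diff1[OF fa(2) xin] by simp
    then show ?thesis unfolding sgv sgnc_def s1 a_def[symmetric] b_def[symmetric]
      by simp
  qed
qed

lemma cf_inj:
  assumes "h \<in> \<Lambda>" "h' \<in> \<Lambda>" "D \<subseteq> \<Lambda> - {h}" "D' \<subseteq> \<Lambda> - {h'}" "cf \<Lambda> h D = cf \<Lambda> h' D'"
  shows "h = h' \<and> D = D'"
proof -
  have "h = h'"
  proof (rule ccontr)
    assume "h \<noteq> h'"
    then have "(h, h \<notin> D') \<in> cf \<Lambda> h' D'" using assms by (simp add: mem_cf)
    then have "(h, h \<notin> D') \<in> cf \<Lambda> h D" using assms(5) by simp
    then show False by (simp add: mem_cf)
  qed
  moreover have "D = D'"
  proof
    show "D \<subseteq> D'"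
    proof
      fix y assume y: "y \<in> D"
      then have "(y, False) \<in> cf \<Lambda> h D" using assms(3) by (auto simp: mem_cf)
      then show "y \<in> D'" using assms(5) by (simp add: mem_cf)
    qed
    show "D' \<subseteq> D"
    proof
      fix y assume y: "y \<in> D'"
      then have "(y, False) \<in> cf \<Lambda> h' D'" using assms(4) by (auto simp: mem_cf)
      then have "(y, False) \<in> cf \<Lambda> h D" using assms(5) by simp
      then show "y \<in> D" by (simp add: mem_cf)
    qed
  qed
  ultimately show ?thesis by simp
qed

definition psi :: "'a::linorder set \<Rightarrow> ('a \<Rightarrow> real) \<Rightarrow> 'a fstate" where
  "psi \<Lambda> v S = (\<Sum>h\<in>\<Lambda>. if S = cf \<Lambda> h {} then complex_of_real (sgnc \<Lambda> h * v h) else 0)"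

lemma psi_cf:
  assumes fin: "finite \<Lambda>" and h: "h \<in> \<Lambda>" and D: "D \<subseteq> \<Lambda> - {h}"
  shows "psi \<Lambda> v (cf \<Lambda> h D) = (if D = {} then complex_of_real (sgnc \<Lambda> h * v h) else 0)"
proof -
  have "psi \<Lambda> v (cf \<Lambda> h D) = (\<Sum>h'\<in>\<Lambda>. if h' = h then (if D = {} then complex_of_real (sgnc \<Lambda> h * v h) else 0) else 0)"
    unfolding psi_def
  proof (intro sum.cong refl)
    fix h' assume h': "h' \<in> \<Lambda>"
    show "(if cf \<Lambda> h D = cf \<Lambda> h' {} then complex_of_real (sgnc \<Lambda> h' * v h') else 0) =
          (if h' = h then (if D = {} then complex_of_real (sgnc \<Lambda> h * v h) else 0) else 0)"
      using cf_inj[OF h h' D, of "{}"] by auto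
  qed
  also have "\<dots> = (if D = {} then complex_of_real (sgnc \<Lambda> h * v h) else 0)"
    using fin h by simp
  finally show ?thesis .
qed

lemma psi_supp:
  assumes "psi \<Lambda> v S \<noteq> 0"
  shows "\<exists>h\<in>\<Lambda>. S = cf \<Lambda> h {}"
proof (rule ccontr)
  assume "\<not> ?thesis"
  then have "psi \<Lambda> v S = 0" unfolding psi_def by (intro sum.neutral) auto
  then show False using assms by simp
qed

lemma term_zero_psi:
  fixes \<Lambda> :: "'a::linorder set"
  assumes x: "x \<in> \<Lambda>" and notcf: "\<not> (\<exists>h\<in>\<Lambda>. \<exists>D. D \<subseteq> \<Lambda> - {h} \<and> S = cf \<Lambda> h D)"
  shows "cdag (x,\<sigma>) (cop (y,\<sigma>) (P0 (psi \<Lambda> v))) S = 0"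
proof (rule ccontr)
  assume nz: "cdag (x,\<sigma>) (cop (y,\<sigma>) (P0 (psi \<Lambda> v))) S \<noteq> 0"
  define A where "A = insert (y,\<sigma>) (S - {(x,\<sigma>)})"
  have c1: "(x,\<sigma>) \<in> S" and c2: "(y,\<sigma>) \<notin> S - {(x,\<sigma>)}" and c3: "P0 (psi \<Lambda> v) A \<noteq> 0"
    using nz unfolding cdag_cop A_def by (auto split: if_splits)
  have "psi \<Lambda> v A \<noteq> 0" using c3 by (auto simp: P0_def split: if_splits)
  then obtain h where h: "h \<in> \<Lambda>" and Ah: "A = cf \<Lambda> h {}" using psi_supp by blast
  have yA: "(y,\<sigma>) \<in> A" unfolding A_def by simp
  then have y: "y \<in> \<Lambda>" "y \<noteq> h" "\<sigma> = True" using Ah by (auto simp: mem_cf)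
  have SS: "S = insert (x,\<sigma>) (A - {(y,\<sigma>)})" unfolding A_def using c1 c2 by auto
  show False
  proof (cases "x = y")
    case True
    then have "S = A" using SS yA by auto
    then show False using notcf h Ah by blast
  next
    case xy: False
    show False
    proof (cases "x = h")
      case True
      have "S = cf \<Lambda> y (sw y h {})"
        using SS Ah True y move_cf[of y \<Lambda> h "{}"] h by simp
      then have "S = cf \<Lambda> y {}" by (simp add: sw_def)
      then show False using notcf y by blast
    next
      case False
      have "(x, \<sigma>) \<in> A - {(y,\<sigma>)}" using Ah x False xy y by (simp add: mem_cf)
      moreover have "A - {(y,\<sigma>)} = S - {(x,\<sigma>)}" unfolding A_def using c2 by auto
      ultimately show False by simp
    qed
  qed
qed

lemma Hinf_psi:
  fixes \<Lambda> :: "'a::linorder set" and t :: "'a \<Rightarrow> 'a \<Rightarrow> real"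
  assumes fin: "finite \<Lambda>"
    and eig: "\<forall>h\<in>\<Lambda>. (\<Sum>y\<in>\<Lambda>. M h y * v y) = \<mu> * v h"
    and Mdef: "M = (\<lambda>x y. if x = y then (\<Sum>z\<in>\<Lambda>-{x}. t z z) else - t y x)"
  shows "Hinf \<Lambda> t (psi \<Lambda> v) = (\<lambda>S. complex_of_real \<mu> * psi \<Lambda> v S)"
proof (rule ext)
  fix S
  show "Hinf \<Lambda> t (psi \<Lambda> v) S = complex_of_real \<mu> * psi \<Lambda> v S"
  proof (cases "\<exists>h\<in>\<Lambda>. \<exists>D. D \<subseteq> \<Lambda> - {h} \<and> S = cf \<Lambda> h D")
    case True
    then obtain h D where h: "h \<in> \<Lambda>" and D: "D \<subseteq> \<Lambda> - {h}" and S: "S = cf \<Lambda> h D" by blast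
    define dr where "dr = (\<Sum>z\<in>\<Lambda>-{h}. t z z)"
    show ?thesis
    proof (cases "D = {}")
      case True
      have Mh: "dr * v h - (\<Sum>y\<in>\<Lambda>-{h}. t y h * v y) = \<mu> * v h"
      proof -
        have "(\<Sum>y\<in>\<Lambda>. M h y * v y) = M h h * v h + (\<Sum>y\<in>\<Lambda>-{h}. M h y * v y)"
          using fin h by (simp add: sum.remove)
        also have "(\<Sum>y\<in>\<Lambda>-{h}. M h y * v y) = - (\<Sum>y\<in>\<Lambda>-{h}. t y h * v y)"
          unfolding Mdef sum_negf[symmetric] by (intro sum.cong refl) auto
        finally show ?thesis using eig h unfolding Mdef dr_def by simp
      qed
      have sumeq: "(\<Sum>x\<in>\<Lambda>-{h}. complex_of_real (t x h) * sg \<Lambda> x h {} * psi \<Lambda> v (cf \<Lambda> x (sw x h {})))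
          = complex_of_real (- sgnc \<Lambda> h * (\<Sum>x\<in>\<Lambda>-{h}. t x h * v x))"
      proof -
        have "(\<Sum>x\<in>\<Lambda>-{h}. complex_of_real (t x h) * sg \<Lambda> x h {} * psi \<Lambda> v (cf \<Lambda> x (sw x h {})))
            = (\<Sum>x\<in>\<Lambda>-{h}. complex_of_real (- sgnc \<Lambda> h * (t x h * v x)))"
        proof (intro sum.cong refl)
          fix x assume x: "x \<in> \<Lambda> - {h}"
          have "sw x h {} = {}" by (simp add: sw_def)
          then have p: "psi \<Lambda> v (cf \<Lambda> x (sw x h {})) = complex_of_real (sgnc \<Lambda> x * v x)"
            using psi_cf[OF fin, of x "{}" v] x by simp
          have s: "sg \<Lambda> x h {} = - complex_of_real (sgnc \<Lambda> h * sgnc \<Lambda> x)"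
            using sg_empty[OF fin, of x h] x h by simp
          have "t x h * (sgnc \<Lambda> h * sgnc \<Lambda> x) * (sgnc \<Lambda> x * v x) = sgnc \<Lambda> h * (t x h * v x) * (sgnc \<Lambda> x * sgnc \<Lambda> x)"
            by (simp add: algebra_simps)
          then have "t x h * (sgnc \<Lambda> h * sgnc \<Lambda> x) * (sgnc \<Lambda> x * v x) = sgnc \<Lambda> h * (t x h * v x)"
            by (simp add: sgnc_sq)
          then show "complex_of_real (t x h) * sg \<Lambda> x h {} * psi \<Lambda> v (cf \<Lambda> x (sw x h {}))
              = complex_of_real (- sgnc \<Lambda> h * (t x h * v x))"
            unfolding p s by (metis mult_minus_left mult_minus_right of_real_minus of_real_mult)
        qed
        also have "\<dots> = complex_of_real (- sgnc \<Lambda> h * (\<Sum>x\<in>\<Lambda>-{h}. t x h * v x))"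
          by (simp add: sum_distrib_left)
        finally show ?thesis .
      qed
      have "Hinf \<Lambda> t (psi \<Lambda> v) S = complex_of_real dr * complex_of_real (sgnc \<Lambda> h * v h)
          + complex_of_real (- sgnc \<Lambda> h * (\<Sum>x\<in>\<Lambda>-{h}. t x h * v x))"
        using Hinf_cf[OF fin h D, of t "psi \<Lambda> v"] sumeq psi_cf[OF fin h D, of v] True
        unfolding S dr_def of_real_sum by simp
      also have "\<dots> = complex_of_real (sgnc \<Lambda> h * (dr * v h - (\<Sum>x\<in>\<Lambda>-{h}. t x h * v x)))"
        by (simp add: algebra_simps)
      also have "\<dots> = complex_of_real \<mu> * psi \<Lambda> v S"
        unfolding Mh S psi_cf[OF fin h D, of v] using True by (simp add: algebra_simps)
      finally show ?thesis .
    next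
      case False
      have z: "psi \<Lambda> v (cf \<Lambda> x (sw x h D)) = 0" if x: "x \<in> \<Lambda> - {h}" for x
      proof -
        have "sw x h D \<noteq> {}" "sw x h D \<subseteq> \<Lambda> - {x}" using False D x h unfolding sw_def by auto
        then show ?thesis using psi_cf[OF fin, of x "sw x h D" v] x by simp
      qed
      have "Hinf \<Lambda> t (psi \<Lambda> v) S = 0"
        using Hinf_cf[OF fin h D, of t "psi \<Lambda> v"] psi_cf[OF fin h D, of v] False z
        unfolding S by simp
      then show ?thesis using psi_cf[OF fin h D, of v] False unfolding S by simp
    qed
  next
    case False
    have p0: "psi \<Lambda> v S = 0" using psi_supp[of \<Lambda> v S] False by blast
    have "Hhop \<Lambda> t (P0 (psi \<Lambda> v)) S = 0"
      unfolding Hhop_def using term_zero_psi[OF _ False] by (intro sum.neutral ballI) simp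
    then have "Hinf \<Lambda> t (psi \<Lambda> v) S = 0" unfolding Hinf_def P0_def by simp
    then show ?thesis using p0 by simp
  qed
qed

definition Aop :: "'a::linorder set \<Rightarrow> 'a fstate \<Rightarrow> 'a fstate" where
  "Aop \<Lambda> g S = (\<Sum>x\<in>\<Lambda>. cdag (x,True) (cop (x,False) g) S)"

definition Bop :: "'a::linorder set \<Rightarrow> 'a fstate \<Rightarrow> 'a fstate" where
  "Bop \<Lambda> g S = (\<Sum>x\<in>\<Lambda>. cdag (x,False) (cop (x,True) g) S)"

lemma Stot1: "Stot \<Lambda> 1 g S = 1/2 * (Aop \<Lambda> g S + Bop \<Lambda> g S)"
  unfolding Stot_def Aop_def Bop_def by (simp add: sum_bool pauli_def sum.distrib)

lemma Stot2: "Stot \<Lambda> 2 g S = 1/2 * (- \<i> * Aop \<Lambda> g S + \<i> * Bop \<Lambda> g S)"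
proof -
  have "Stot \<Lambda> 2 g S = 1/2 * (\<Sum>x\<in>\<Lambda>. - \<i> * cdag (x,True) (cop (x,False) g) S + \<i> * cdag (x,False) (cop (x,True) g) S)"
    unfolding Stot_def by (intro arg_cong[where f="\<lambda>z. 1/2 * z"] sum.cong refl) (simp add: sum_bool pauli_def)
  also have "(\<Sum>x\<in>\<Lambda>. - \<i> * cdag (x,True) (cop (x,False) g) S + \<i> * cdag (x,False) (cop (x,True) g) S)
     = - \<i> * Aop \<Lambda> g S + \<i> * Bop \<Lambda> g S"
    unfolding Aop_def Bop_def by (simp only: sum.distrib sum_distrib_left)
  finally show ?thesis .
qed

lemma Stot3: "Stot \<Lambda> 3 g S = (1/2 * (\<Sum>x\<in>\<Lambda>. (if (x,True) \<in> S then 1 else 0) - (if (x,False) \<in> S then 1 else 0))) * g S"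
proof -
  have "Stot \<Lambda> 3 g S = 1/2 * (\<Sum>x\<in>\<Lambda>. ((if (x,True) \<in> S then 1 else 0) - (if (x,False) \<in> S then 1 else 0)) * g S)"
    unfolding Stot_def by (intro arg_cong[where f="\<lambda>z. 1/2 * z"] sum.cong refl) (simp add: sum_bool pauli_def cdag_cop_same)
  then show ?thesis by (simp add: sum_distrib_right)
qed

lemma cdag_cop_scale: "cdag m (cop m' (\<lambda>S. c * g S)) S = c * cdag m (cop m' g) S"
  unfolding cdag_def cop_def by auto

lemma Aop_scale: "Aop \<Lambda> (\<lambda>S. c * g S) S = c * Aop \<Lambda> g S"
  unfolding Aop_def cdag_cop_scale by (simp add: sum_distrib_left)

lemma Bop_scale: "Bop \<Lambda> (\<lambda>S. c * g S) S = c * Bop \<Lambda> g S"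
  unfolding Bop_def cdag_cop_scale by (simp add: sum_distrib_left)

lemma Aop_allup:
  assumes up: "\<And>S w. g S \<noteq> 0 \<Longrightarrow> (w, False) \<notin> S"
  shows "Aop \<Lambda> g S = 0"
proof -
  have "cdag (x,True) (cop (x,False) g) S = 0" for x
    using up[of "insert (x, False) (S - {(x, True)})" x] unfolding cdag_cop by auto
  then show ?thesis unfolding Aop_def by simp
qed

lemma AB_term:
  assumes up: "\<And>S w. g S \<noteq> 0 \<Longrightarrow> (w, False) \<notin> S" and fin: "finite \<Lambda>" and z: "z \<in> \<Lambda>"
  shows "cdag (z,True) (cop (z,False) (Bop \<Lambda> g)) S = (if (z,True) \<in> S \<and> (z,False) \<notin> S then g S else 0)"
proof (cases "(z,True) \<in> S \<and> (z,False) \<notin> S")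
  case True
  define Q where "Q = insert (z,False) (S - {(z,True)})"
  have Qr: "Q - {(z,False)} = S - {(z,True)}" unfolding Q_def using True by auto
  have other: "cdag (x,False) (cop (x,True) g) Q = 0" if "x \<noteq> z" for x
  proof -
    have "(z,False) \<in> insert (x,True) (Q - {(x,False)})" unfolding Q_def using that by auto
    then have "g (insert (x,True) (Q - {(x,False)})) = 0" using up by blast
    then show ?thesis unfolding cdag_cop by simp
  qed
  have same: "cdag (z,False) (cop (z,True) g) Q = fsign (z,False) (S - {(z,True)}) * fsign (z,True) S * g S"
  proof -
    have "(z,False) \<in> Q" "(z,True) \<notin> Q - {(z,False)}" unfolding Q_def by auto
    moreover have "insert (z,True) (S - {(z,True)}) = S" using True by auto
    moreover have "fsign (z,False) Q = fsign (z,False) (S - {(z,True)})" unfolding Q_def by (rule fsign_insert)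
    ultimately show ?thesis unfolding cdag_cop Qr by (simp add: fsign_remove)
  qed
  have "Bop \<Lambda> g Q = (\<Sum>x\<in>\<Lambda>. if x = z then fsign (z,False) (S - {(z,True)}) * fsign (z,True) S * g S else 0)"
    unfolding Bop_def using other same by (intro sum.cong refl) auto
  also have "\<dots> = fsign (z,False) (S - {(z,True)}) * fsign (z,True) S * g S" using fin z by simp
  finally have BQ: "Bop \<Lambda> g Q = fsign (z,False) (S - {(z,True)}) * fsign (z,True) S * g S" .
  have "cdag (z,True) (cop (z,False) (Bop \<Lambda> g)) S
      = (fsign (z,True) S * fsign (z,True) S) * (fsign (z,False) (S - {(z,True)}) * fsign (z,False) (S - {(z,True)})) * g S"
    using True unfolding cdag_cop Q_def[symmetric] BQ by (simp add: algebra_simps)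
  then show ?thesis using True by (simp add: fsign_sq)
next
  case False
  then show ?thesis unfolding cdag_cop by auto
qed

lemma sum_ind_card: "finite A \<Longrightarrow> (\<Sum>x\<in>A. if P x then (1::complex) else 0) = of_nat (card {x \<in> A. P x})"
  by (simp add: sum.inter_filter[symmetric])

lemma spin_allup:
  fixes \<Lambda> :: "'a::linorder set" and g :: "'a fstate"
  assumes fin: "finite \<Lambda>"
    and up: "\<And>S w. g S \<noteq> 0 \<Longrightarrow> (w, False) \<notin> S"
    and cnt: "\<And>S. g S \<noteq> 0 \<Longrightarrow> card {z \<in> \<Lambda>. (z, True) \<in> S} = n"
  shows "Stot_sq \<Lambda> g = (\<lambda>S. complex_of_real (real n / 2 * (real n / 2 + 1)) * g S)"
proof (rule ext)
  fix S
  have A0: "Aop \<Lambda> g S' = 0" for S' using Aop_allup[where g=g, OF up] by blast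
  have AB: "Aop \<Lambda> (Bop \<Lambda> g) S = of_nat n * g S"
  proof (cases "g S = 0")
    case True
    have "Aop \<Lambda> (Bop \<Lambda> g) S = (\<Sum>z\<in>\<Lambda>. if (z,True) \<in> S \<and> (z,False) \<notin> S then g S else 0)"
      unfolding Aop_def by (intro sum.cong refl AB_term[where g=g, OF up fin])
    also have "\<dots> = 0" using True by (intro sum.neutral ballI) simp
    finally show ?thesis using True by simp
  next
    case False
    have "Aop \<Lambda> (Bop \<Lambda> g) S = (\<Sum>z\<in>\<Lambda>. if (z,True) \<in> S then g S else 0)"
      unfolding Aop_def using AB_term[where g=g, OF up fin] up[OF False] by (intro sum.cong refl) auto
    also have "\<dots> = (\<Sum>z\<in>\<Lambda>. if (z,True) \<in> S then 1 else 0) * g S"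
      unfolding sum_distrib_right by (intro sum.cong refl) simp
    also have "\<dots> = of_nat n * g S" using sum_ind_card[OF fin] cnt[OF False] by simp
    finally show ?thesis .
  qed
  have S1: "Stot \<Lambda> 1 g = (\<lambda>S. 1/2 * Bop \<Lambda> g S)" proof (rule ext)
    fix S' show "Stot \<Lambda> 1 g S' = 1/2 * Bop \<Lambda> g S'" using Stot1[of \<Lambda> g S'] A0[of S'] by simp
  qed
  have S2: "Stot \<Lambda> 2 g = (\<lambda>S. \<i>/2 * Bop \<Lambda> g S)" proof (rule ext)
    fix S' show "Stot \<Lambda> 2 g S' = \<i>/2 * Bop \<Lambda> g S'" using Stot2[of \<Lambda> g S'] A0[of S'] by simp
  qed
  have t1: "Stot \<Lambda> 1 (Stot \<Lambda> 1 g) S = 1/4 * (Aop \<Lambda> (Bop \<Lambda> g) S + Bop \<Lambda> (Bop \<Lambda> g) S)"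
    unfolding S1 Stot1 Aop_scale Bop_scale by (simp add: algebra_simps)
  have t2: "Stot \<Lambda> 2 (Stot \<Lambda> 2 g) S = 1/4 * (Aop \<Lambda> (Bop \<Lambda> g) S - Bop \<Lambda> (Bop \<Lambda> g) S)"
    unfolding S2 Stot2 Aop_scale Bop_scale by (simp add: algebra_simps)
  define w where "w S' = 1/2 * (\<Sum>x\<in>\<Lambda>. (if (x,True) \<in> S' then 1 else 0) - (if (x,False) \<in> S' then (1::complex) else 0))" for S'
  have t3: "Stot \<Lambda> 3 (Stot \<Lambda> 3 g) S = w S * (w S * g S)" unfolding Stot3 w_def by simp
  have w3: "w S * (w S * g S) = (of_nat n / 2)^2 * g S"
  proof (cases "g S = 0")
    case True then show ?thesis by simp
  next
    case False
    have "w S = 1/2 * (\<Sum>x\<in>\<Lambda>. if (x,True) \<in> S then 1 else 0)"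
      unfolding w_def using up[OF False] by simp
    also have "\<dots> = of_nat n / 2" using sum_ind_card[OF fin] cnt[OF False] by simp
    finally have wS: "w S = of_nat n / 2" .
    show ?thesis unfolding wS power2_eq_square by (simp only: mult.assoc)
  qed
  have "Stot_sq \<Lambda> g S = Stot \<Lambda> 1 (Stot \<Lambda> 1 g) S + Stot \<Lambda> 2 (Stot \<Lambda> 2 g) S + Stot \<Lambda> 3 (Stot \<Lambda> 3 g) S"
    unfolding Stot_sq_def by simp
  also have "\<dots> = 1/2 * (of_nat n * g S) + (of_nat n / 2)^2 * g S"
    unfolding t1 t2 t3 w3 AB by (simp add: algebra_simps)
  also have "\<dots> = complex_of_real (real n / 2 * (real n / 2 + 1)) * g S"
    by (simp add: algebra_simps power2_eq_square)
  finally show "Stot_sq \<Lambda> g S = complex_of_real (real n / 2 * (real n / 2 + 1)) * g S" .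
qed

theorem mainTheorem4:
  fixes \<Lambda> :: "'a::linorder set" and t :: "'a \<Rightarrow> 'a \<Rightarrow> real" and Ne :: nat
  assumes "finite \<Lambda>" and "card \<Lambda> \<ge> 2"
    and "\<forall>x\<in>\<Lambda>. \<forall>y\<in>\<Lambda>. t x y = t y x"
    and "\<forall>x\<in>\<Lambda>. \<forall>y\<in>\<Lambda>. t x y \<ge> 0"
    and "Ne = card \<Lambda> - 1"
  shows "\<exists>\<psi>. ground_state \<Lambda> t Ne \<psi> \<and> has_total_spin \<Lambda> (real Ne / 2) \<psi>"
proof -
  have fin: "finite \<Lambda>" and c1: "card \<Lambda> \<ge> 1" using assms(1,2) by auto
  have ne: "\<Lambda> \<noteq> {}" using c1 by auto
  define M where "M = (\<lambda>x y. if x = y then (\<Sum>z\<in>\<Lambda>-{x}. t z z) else - t y x)"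
  have symM: "M x y = M y x" if "x \<in> \<Lambda>" "y \<in> \<Lambda>" for x y
    using assms(3) that unfolding M_def by auto
  obtain \<mu> v where v: "\<exists>h\<in>\<Lambda>. v h \<noteq> 0"
    and eig: "\<forall>x\<in>\<Lambda>. (\<Sum>y\<in>\<Lambda>. M x y * v y) = \<mu> * v x"
    and ray: "\<forall>f. \<mu> * (\<Sum>x\<in>\<Lambda>. (f x)^2) \<le> (\<Sum>x\<in>\<Lambda>. f x * (\<Sum>y\<in>\<Lambda>. M x y * f y))"
    using rayleigh[OF fin ne, of M] symM by blast
  define \<psi> where "\<psi> = psi \<Lambda> v"
  have H: "Hinf \<Lambda> t \<psi> = (\<lambda>S. complex_of_real \<mu> * \<psi> S)"
    unfolding \<psi>_def by (rule Hinf_psi[OF fin eig M_def])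
  have supp: "\<exists>h\<in>\<Lambda>. S = cf \<Lambda> h {}" if "\<psi> S \<noteq> 0" for S
    using psi_supp that unfolding \<psi>_def by blast
  have cardcf: "card (cf \<Lambda> h {}) = card \<Lambda> - 1" if "h \<in> \<Lambda>" for h
  proof -
    have "inj_on (\<lambda>y::'a. (y, y \<notin> {})) (\<Lambda> - {h})" by (auto simp: inj_on_def)
    then show ?thesis unfolding cf_def using that fin by (simp add: card_image)
  qed
  have inH: "\<psi> \<in> HNe \<Lambda> Ne"
    unfolding HNe_def
  proof (intro CollectI allI impI)
    fix S assume "\<psi> S \<noteq> 0"
    then obtain h where h: "h \<in> \<Lambda>" "S = cf \<Lambda> h {}" using supp by blast
    show "S \<subseteq> \<Lambda> \<times> UNIV \<and> finite S \<and> card S = Ne"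
      using h fin cardcf[OF h(1)] assms(5) unfolding cf_def by auto
  qed
  have P0p: "P0 \<psi> = \<psi>"
  proof (rule ext)
    fix S show "P0 \<psi> S = \<psi> S"
    proof (cases "\<psi> S = 0")
      case False
      then obtain h where "S = cf \<Lambda> h {}" using supp by blast
      then show ?thesis by (simp add: P0_def cf_no_double)
    qed (simp add: P0_def)
  qed
  have inP: "\<psi> \<in> P0HNe \<Lambda> Ne" unfolding P0HNe_def using inH P0p by (metis image_eqI)
  have nz: "\<psi> \<noteq> (\<lambda>_. 0)"
  proof
    assume z: "\<psi> = (\<lambda>_. 0)"
    obtain h where h: "h \<in> \<Lambda>" "v h \<noteq> 0" using v by blast
    have "\<psi> (cf \<Lambda> h {}) = complex_of_real (sgnc \<Lambda> h * v h)"
      unfolding \<psi>_def using psi_cf[OF fin h(1), of "{}" v] by simp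
    moreover have "sgnc \<Lambda> h \<noteq> 0" using sgnc_sq[of \<Lambda> h] by auto
    ultimately show False using z h(2) by simp
  qed
  have gs: "ground_state \<Lambda> t Ne \<psi>"
    unfolding ground_state_def
  proof (intro conjI exI[of _ \<mu>] inP nz H ballI allI impI)
    fix \<phi> E' assume \<phi>: "\<phi> \<in> P0HNe \<Lambda> Ne" and nz\<phi>: "\<phi> \<noteq> (\<lambda>_. 0)"
      and e\<phi>: "Hinf \<Lambda> t \<phi> = (\<lambda>S. E' * \<phi> S)"
    show "\<mu> \<le> Re E'"
      using lower_bound[OF fin c1 assms(4) _ nz\<phi> e\<phi> ray M_def] \<phi> assms(5) by simp
  qed
  have up: "(w, False) \<notin> S" if nzS: "\<psi> S \<noteq> 0" for S w
  proof -
    obtain h where "S = cf \<Lambda> h {}" using supp nzS by blast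
    then show ?thesis by (simp add: mem_cf)
  qed
  have cnt: "card {z \<in> \<Lambda>. (z, True) \<in> S} = Ne" if nzS: "\<psi> S \<noteq> 0" for S
  proof -
    obtain h where h: "h \<in> \<Lambda>" "S = cf \<Lambda> h {}" using supp nzS by blast
    have "{z \<in> \<Lambda>. (z, True) \<in> S} = \<Lambda> - {h}" using h by (auto simp: mem_cf)
    then show ?thesis using h fin assms(5) by simp
  qed
  have "has_total_spin \<Lambda> (real Ne / 2) \<psi>"
    unfolding has_total_spin_def using spin_allup[OF fin, of \<psi> Ne] up cnt by blast
  then show ?thesis using gs by blast
qed

end
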